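(* For every odd integer $n\ge 3$ there exist a boolean classifier $\kappa:\{0,1\}^n\to\{0,1\}$ and a point $\mathbf v\in\{0,1\}^n$ such that, for the sample $(\mathbf v,\kappa(\mathbf v))$, some feature $i\in\mathcal F=\{1,\dots,n\}$ is relevant and $\mathrm{Sv}(i)=0$ (issue I3).
   Context: Let $\mathcal F=\{1,\dots,n\}$. A boolean classifier is a non-constant function $\kappa:\{0,1\}^n\to\{0,1\}$; a sample is a pair $(\mathbf v,c)$ with $\mathbf v\in\{0,1\}^n$ and $c=\kappa(\mathbf v)$. For $\mathcal S\subseteq\mathcal F$ let $\Upsilon(\mathcal S;\mathbf v)=\{\mathbf x\in\{0,1\}^n : x_j=v_j \text{ for all } j\in\mathcal S\}$ and, for any function $g$ on $\{0,1\}^n$, $\mathbf E[g\mid \mathbf x_{\mathcal S}=\mathbf v_{\mathcal S}]=|\Upsilon(\mathcal S;\mathbf v)|^{-1}\sum_{\mathbf x\in\Upsilon(\mathcal S;\mathbf v)}g(\mathbf x)$ (uniform distribution, independent features). The characteristic function is $\upsilon(\mathcal S)=\mathbf E[\kappa\mid\mathbf x_{\mathcal S}=\mathbf v_{\mathcal S}]$, and the SHAP score of feature $i$ is $\mathrm{Sv}(i)=\sum_{\mathcal S\subseteq\mathcal F\setminus\{i\}}\frac{|\mathcal S|!\,(n-|\mathcal S|-1)!}{n!}\big(\upsilon(\mathcal S\cup\{i\})-\upsilon(\mathcal S)\big)$. The similarity predicate is $\sigma(\mathbf x)=1$ if $\kappa(\mathbf x)=\kappa(\mathbf v)$ and $0$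 otherwise. A set $\mathcal S\subseteq\mathcal F$ is a weak abductive explanation (WAXp) if $\mathbf E[\sigma\mid\mathbf x_{\mathcal S}=\mathbf v_{\mathcal S}]=1$ (i.e. $\kappa(\mathbf x)=\kappa(\mathbf v)$ for all $\mathbf x\in\Upsilon(\mathcal S;\mathbf v)$); an abductive explanation (AXp) is a WAXp $\mathcal S$ such that $\mathcal S\setminus\{t\}$ is not a WAXp for every $t\in\mathcal S$. A feature is relevant if it belongs to at least one AXp, and irrelevant otherwise. *)

theory Defs
  imports "HOL-Library.FuncSet" Complex_Main
begin

text \<open>Features are 1..n; a point of {0,1}^n is an extensional function
  on {1..n} with boolean values (True = 1). A classifier maps points to
  booleans (True = 1); values outside the point set are irrelevant.\<close>

definition points :: "nat \<Rightarrow> (nat \<Rightarrow> bool) set" where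
  "points n = PiE {1..n} (\<lambda>_. UNIV)"

definition feats :: "nat \<Rightarrow> nat set" where
  "feats n = {1..n}"

definition is_classifier :: "nat \<Rightarrow> ((nat \<Rightarrow> bool) \<Rightarrow> bool) \<Rightarrow> bool" where
  "is_classifier n \<kappa> \<longleftrightarrow> (\<exists>x\<in>points n. \<exists>y\<in>points n. \<kappa> x \<noteq> \<kappa> y)"

definition Upsilon :: "nat \<Rightarrow> nat set \<Rightarrow> (nat \<Rightarrow> bool) \<Rightarrow> (nat \<Rightarrow> bool) set" where
  "Upsilon n S v = {x \<in> points n. \<forall>j\<in>S. x j = v j}"

definition cond_exp :: "nat \<Rightarrow> ((nat \<Rightarrow> bool) \<Rightarrow> real) \<Rightarrow> nat set \<Rightarrow> (nat \<Rightarrow> bool) \<Rightarrow> real" where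
  "cond_exp n g S v = (\<Sum>x\<in>Upsilon n S v. g x) / real (card (Upsilon n S v))"

definition charfn :: "nat \<Rightarrow> ((nat \<Rightarrow> bool) \<Rightarrow> bool) \<Rightarrow> (nat \<Rightarrow> bool) \<Rightarrow> nat set \<Rightarrow> real" where
  "charfn n \<kappa> v S = cond_exp n (\<lambda>x. if \<kappa> x then 1 else 0) S v"

definition shap :: "nat \<Rightarrow> ((nat \<Rightarrow> bool) \<Rightarrow> bool) \<Rightarrow> (nat \<Rightarrow> bool) \<Rightarrow> nat \<Rightarrow> real" where
  "shap n \<kappa> v i = (\<Sum>S\<in>Pow (feats n - {i}).
     (fact (card S) * fact (n - card S - 1) / fact n) *
     (charfn n \<kappa> v (insert i S) - charfn n \<kappa> v S))"

definition sim :: "((nat \<Rightarrow> bool) \<Rightarrow> bool) \<Rightarrow> (nat \<Rightarrow> bool) \<Rightarrow> (nat \<Rightarrow> bool) \<Rightarrow> real" where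
  "sim \<kappa> v x = (if \<kappa> x = \<kappa> v then 1 else 0)"

definition WAXp :: "nat \<Rightarrow> ((nat \<Rightarrow> bool) \<Rightarrow> bool) \<Rightarrow> (nat \<Rightarrow> bool) \<Rightarrow> nat set \<Rightarrow> bool" where
  "WAXp n \<kappa> v S \<longleftrightarrow> S \<subseteq> feats n \<and> cond_exp n (sim \<kappa> v) S v = 1"

definition AXp :: "nat \<Rightarrow> ((nat \<Rightarrow> bool) \<Rightarrow> bool) \<Rightarrow> (nat \<Rightarrow> bool) \<Rightarrow> nat set \<Rightarrow> bool" where
  "AXp n \<kappa> v S \<longleftrightarrow> WAXp n \<kappa> v S \<and> (\<forall>t\<in>S. \<not> WAXp n \<kappa> v (S - {t}))"

definition relevant :: "nat \<Rightarrow> ((nat \<Rightarrow> bool) \<Rightarrow> bool) \<Rightarrow> (nat \<Rightarrow> bool) \<Rightarrow> nat \<Rightarrow> bool" where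
  "relevant n \<kappa> v i \<longleftrightarrow> (\<exists>S. AXp n \<kappa> v S \<and> i \<in> S)"

end

theory Submission imports Defs begin

lemma upd_pt: "x \<in> points n \<Longrightarrow> m \<in> {1..n} \<Longrightarrow> x(m:=b) \<in> points n"
  by (auto simp: points_def PiE_iff extensional_def)

lemma fin_pts: "finite (points n)"
  by (simp add: points_def finite_PiE)

lemma fin_U: "finite (Upsilon n S v)"
  using fin_pts by (simp add: Upsilon_def)

definition fl :: "(nat \<Rightarrow> bool) \<Rightarrow> nat \<Rightarrow> bool" where "fl x = x(1 := \<not> x 1)"
definition sw :: "(nat \<Rightarrow> bool) \<Rightarrow> nat \<Rightarrow> bool" where "sw x = x(2 := x 3, 3 := x 2)"
definition tau :: "nat \<Rightarrow> nat" where "tau m = (if m = 2 then 3 else if m = 3 then 2 else m)"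
definition kap :: "(nat \<Rightarrow> bool) \<Rightarrow> bool" where "kap x = (x 2 \<noteq> x 1 \<and> x 3 = x 1)"
definition vv :: "nat \<Rightarrow> nat \<Rightarrow> bool" where "vv n = restrict (\<lambda>_. True) {1..n}"

lemma fl_fl[simp]: "fl (fl x) = x" by (auto simp: fl_def)
lemma sw_sw[simp]: "sw (sw x) = x" by (auto simp: sw_def)
lemma tau_tau[simp]: "tau (tau m) = m" by (auto simp: tau_def)
lemma sw_tau: "sw x (tau m) = x m" by (auto simp: sw_def tau_def)
lemma kap_sw: "kap (sw x) = kap (fl x)" by (auto simp: kap_def sw_def fl_def)
lemma kap_fl_sw: "kap (fl (sw x)) = kap x" by (auto simp: kap_def sw_def fl_def)
lemma inj_sw: "inj_on sw X" by (metis sw_sw inj_on_inverseI)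
lemma inj_fl: "inj_on fl X" by (metis fl_fl inj_on_inverseI)

lemma flip_split:
  assumes n: "1 \<le> n" and i: "1 \<notin> S"
  shows "Upsilon n S v = Upsilon n (insert 1 S) v \<union> fl ` Upsilon n (insert 1 S) v"
    "Upsilon n (insert 1 S) v \<inter> fl ` Upsilon n (insert 1 S) v = {}"
proof -
  show "Upsilon n (insert 1 S) v \<inter> fl ` Upsilon n (insert 1 S) v = {}"
    by (auto simp: Upsilon_def fl_def)
  show "Upsilon n S v = Upsilon n (insert 1 S) v \<union> fl ` Upsilon n (insert 1 S) v"
  proof (intro equalityI subsetI)
    fix x assume x: "x \<in> Upsilon n S v"
    show "x \<in> Upsilon n (insert 1 S) v \<union> fl ` Upsilon n (insert 1 S) v"
    proof (cases "x 1 = v 1")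
      case True thus ?thesis using x by (auto simp: Upsilon_def)
    next
      case False
      have "fl x \<in> Upsilon n (insert 1 S) v"
        using x False n i upd_pt[of x n 1] by (auto simp: Upsilon_def fl_def)
      hence "fl (fl x) \<in> fl ` Upsilon n (insert 1 S) v" by blast
      thus ?thesis by simp
    qed
  next
    fix x assume "x \<in> Upsilon n (insert 1 S) v \<union> fl ` Upsilon n (insert 1 S) v"
    thus "x \<in> Upsilon n S v" using n i upd_pt[of _ n 1]
      by (auto simp: Upsilon_def fl_def split: if_splits)
  qed
qed

lemma sw_image:
  assumes n: "3 \<le> n" and v: "v 2 = v 3"
  shows "sw ` Upsilon n T v = Upsilon n (tau ` T) v"
proof -
  have A: "sw x \<in> Upsilon n (tau ` T) v" if "x \<in> Upsilon n T v" for x T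
  proof -
    have "sw x \<in> points n" using that n upd_pt by (auto simp: Upsilon_def sw_def)
    moreover have "\<forall>m\<in>T. sw x (tau m) = v (tau m)"
    proof
      fix m assume "m \<in> T"
      hence "x m = v m" using that by (simp add: Upsilon_def)
      moreover have "v (tau m) = v m" using v by (simp add: tau_def)
      ultimately show "sw x (tau m) = v (tau m)" by (simp add: sw_tau)
    qed
    ultimately show ?thesis by (auto simp: Upsilon_def)
  qed
  show ?thesis
  proof (intro equalityI subsetI)
    fix y assume "y \<in> sw ` Upsilon n T v" thus "y \<in> Upsilon n (tau ` T) v" using A by blast
  next
    fix y assume "y \<in> Upsilon n (tau ` T) v"
    hence "sw y \<in> Upsilon n (tau ` tau ` T) v" using A by blast
    moreover have "tau ` tau ` T = T" by (simp add: image_comp comp_def)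
    ultimately have "sw (sw y) \<in> sw ` Upsilon n T v" by (metis imageI)
    thus "y \<in> sw ` Upsilon n T v" by simp
  qed
qed

definition ff :: "(nat \<Rightarrow> bool) \<Rightarrow> real" where "ff x = (if kap x then 1 else 0)"

lemma charfn_ff: "charfn n kap v S = (\<Sum>x\<in>Upsilon n S v. ff x) / real (card (Upsilon n S v))"
  by (simp add: charfn_def cond_exp_def ff_def)

lemma delta_formula:
  assumes n: "1 \<le> n" and i: "1 \<notin> S"
  shows "charfn n kap v (insert 1 S) - charfn n kap v S =
    ((\<Sum>x\<in>Upsilon n (insert 1 S) v. ff x) - (\<Sum>x\<in>Upsilon n (insert 1 S) v. ff (fl x)))
      / (2 * real (card (Upsilon n (insert 1 S) v)))"
proof -
  let ?U = "Upsilon n (insert 1 S) v"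
  have fin: "finite ?U" "finite (fl ` ?U)" using fin_U by auto
  have s: "(\<Sum>x\<in>Upsilon n S v. ff x) = (\<Sum>x\<in>?U. ff x) + (\<Sum>x\<in>?U. ff (fl x))"
    unfolding flip_split[OF n i]
    by (subst sum.union_disjoint[OF fin flip_split(2)[OF n i]])
       (simp add: sum.reindex[OF inj_fl])
  have c: "card (Upsilon n S v) = 2 * card ?U"
    unfolding flip_split[OF n i]
    by (subst card_Un_disjoint[OF fin flip_split(2)[OF n i]]) (simp add: card_image[OF inj_fl])
  show ?thesis
    unfolding charfn_ff s c
    by (cases "card ?U = 0") (auto simp: field_simps)
qed

lemma delta_tau:
  assumes n: "3 \<le> n" and i: "1 \<notin> S"
  shows "charfn n kap (vv n) (insert 1 (tau ` S)) - charfn n kap (vv n) (tau ` S) =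
     - (charfn n kap (vv n) (insert 1 S) - charfn n kap (vv n) S)"
proof -
  let ?v = "vv n"
  let ?U = "Upsilon n (insert 1 S) ?v"
  have v23: "?v 2 = ?v 3" using n by (simp add: vv_def)
  have i': "1 \<notin> tau ` S" using i by (auto simp: tau_def split: if_splits)
  have ins: "insert 1 (tau ` S) = tau ` (insert 1 S)" by (simp add: tau_def)
  have U': "Upsilon n (insert 1 (tau ` S)) ?v = sw ` ?U"
    unfolding ins using sw_image[OF n v23] by simp
  have a: "(\<Sum>x\<in>sw ` ?U. ff x) = (\<Sum>x\<in>?U. ff (fl x))"
    by (simp add: sum.reindex[OF inj_sw] ff_def kap_sw)
  have b: "(\<Sum>x\<in>sw ` ?U. ff (fl x)) = (\<Sum>x\<in>?U. ff x)"
    by (simp add: sum.reindex[OF inj_sw] ff_def kap_fl_sw)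
  have c: "card (sw ` ?U) = card ?U" by (simp add: card_image[OF inj_sw])
  have d1: "charfn n kap ?v (insert 1 (tau ` S)) - charfn n kap ?v (tau ` S) =
    ((\<Sum>x\<in>sw ` ?U. ff x) - (\<Sum>x\<in>sw ` ?U. ff (fl x))) / (2 * real (card (sw ` ?U)))"
    using delta_formula[of n "tau ` S" ?v] n i' U' by simp
  have d2: "charfn n kap ?v (insert 1 S) - charfn n kap ?v S =
    ((\<Sum>x\<in>?U. ff x) - (\<Sum>x\<in>?U. ff (fl x))) / (2 * real (card ?U))"
    using delta_formula[of n S ?v] n i by simp
  show ?thesis unfolding d1 d2 a b c by (metis minus_diff_eq minus_divide_left)
qed

lemma shap_zero:
  assumes n: "3 \<le> n"
  shows "shap n kap (vv n) 1 = 0"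
proof -
  let ?P = "Pow (feats n - {1})"
  define h where "h S = (fact (card S) * fact (n - card S - 1) / fact n) *
     (charfn n kap (vv n) (insert 1 S) - charfn n kap (vv n) S)" for S
  have sh: "shap n kap (vv n) 1 = sum h ?P" by (simp add: shap_def h_def)
  have injt: "inj tau" by (metis tau_tau inj_on_inverseI)
  have tt: "tau ` tau ` S = S" for S by (simp add: image_comp comp_def)
  have inj: "inj_on (image tau) ?P"
    by (rule inj_on_inverseI[where g="image tau"]) (rule tt)
  have sub: "tau ` S \<in> ?P" if "S \<in> ?P" for S
    using that n by (auto simp: feats_def tau_def)
  have im: "image tau ` ?P = ?P"
  proof (intro equalityI subsetI)
    fix T assume "T \<in> image tau ` ?P" thus "T \<in> ?P" using sub by blast
  next
    fix T assume "T \<in> ?P"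
    hence "tau ` T \<in> ?P" by (rule sub)
    hence "tau ` tau ` T \<in> image tau ` ?P" by blast
    thus "T \<in> image tau ` ?P" by (simp only: tt)
  qed
  have hneg: "h (tau ` S) = - h S" if "S \<in> ?P" for S
  proof -
    have "1 \<notin> S" using that by auto
    note d = delta_tau[OF n this]
    have c: "card (tau ` S) = card S" using card_image[OF inj_on_subset[OF injt]] by blast
    show ?thesis unfolding h_def d c by (simp only: mult_minus_right)
  qed
  have "sum h ?P = sum h (image tau ` ?P)" by (simp only: im)
  also have "\<dots> = sum (h \<circ> image tau) ?P" by (rule sum.reindex[OF inj])
  also have "\<dots> = sum (\<lambda>S. - h S) ?P" by (rule sum.cong) (auto simp: hneg)
  also have "\<dots> = - sum h ?P" by (simp add: sum_negf)
  finally show ?thesis unfolding sh by simp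
qed

lemma cond_exp_one:
  assumes "x \<in> Upsilon n S v" and g01: "\<forall>y. g y = 0 \<or> g y = 1"
  shows "cond_exp n g S v = 1 \<longleftrightarrow> (\<forall>y\<in>Upsilon n S v. g y = 1)"
proof -
  let ?U = "Upsilon n S v"
  have fin: "finite ?U" by (rule fin_U)
  have cpos: "card ?U > 0" using assms fin card_gt_0_iff by blast
  show ?thesis
  proof
    assume "\<forall>y\<in>?U. g y = 1"
    hence "sum g ?U = real (card ?U)" by simp
    thus "cond_exp n g S v = 1" using cpos by (simp add: cond_exp_def)
  next
    assume c: "cond_exp n g S v = 1"
    show "\<forall>y\<in>?U. g y = 1"
    proof (rule ccontr)
      assume "\<not> (\<forall>y\<in>?U. g y = 1)"
      then obtain z where z: "z \<in> ?U" "g z \<noteq> 1" by blast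
      hence gz: "g z = 0" using g01 by metis
      have "sum g ?U = g z + sum g (?U - {z})" using z fin by (simp add: sum.remove)
      also have "\<dots> \<le> 0 + sum (\<lambda>_. 1) (?U - {z})"
        using gz g01 by (intro add_mono sum_mono) (auto, metis order.refl zero_le_one)
      also have "\<dots> = real (card ?U) - 1" using z fin cpos by (simp add: card_Diff_singleton of_nat_diff)
      finally have "sum g ?U < real (card ?U)" by simp
      thus False using c cpos by (simp add: cond_exp_def)
    qed
  qed
qed

lemma vv_pt: "vv n \<in> points n" by (simp add: vv_def points_def)

theorem proposition2:
  fixes n :: nat
  assumes "odd n" and "n \<ge> 3"
  shows "\<exists>\<kappa> v. is_classifier n \<kappa> \<and> v \<in> points n \<and>
           (\<exists>i\<in>feats n. relevant n \<kappa> v i \<and> shap n \<kappa> v i = 0)"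
proof -
  have n: "3 \<le> n" by fact
  let ?v = "vv n"
  have vv: "?v m = True" if "m \<in> {1..n}" for m using that by (simp add: vv_def)
  have v123: "?v 1" "?v 2" "?v 3" using n by (auto simp: vv)
  have kv: "\<not> kap ?v" using v123 by (simp add: kap_def)
  define x1 where "x1 = ?v(2 := False)"
  define x2 where "x2 = ?v(1 := False, 3 := False)"
  have x1p: "x1 \<in> points n" unfolding x1_def using n by (intro upd_pt vv_pt) auto
  have x2p: "x2 \<in> points n" unfolding x2_def using n by (intro upd_pt vv_pt) auto
  have kx1: "kap x1" using v123 by (simp add: x1_def kap_def)
  have kx2: "kap x2" using v123 by (simp add: x2_def kap_def)
  have g01: "\<forall>y. sim kap ?v y = 0 \<or> sim kap ?v y = 1" by (simp add: sim_def)
  have vU: "?v \<in> Upsilon n S ?v" for S using vv_pt by (simp add: Upsilon_def)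
  have W12: "WAXp n kap ?v {1,2}"
    unfolding WAXp_def
  proof
    show "{1, 2} \<subseteq> feats n" using n by (auto simp: feats_def)
    show "cond_exp n (sim kap ?v) {1, 2} ?v = 1"
      using v123 kv by (subst cond_exp_one[OF vU g01]) (auto simp: Upsilon_def sim_def kap_def)
  qed
  have W1: "\<not> WAXp n kap ?v {1}"
  proof -
    have "x1 \<in> Upsilon n {1} ?v" using x1p by (simp add: Upsilon_def x1_def)
    thus ?thesis unfolding WAXp_def using kx1 kv
      by (subst cond_exp_one[OF vU g01]) (auto simp: sim_def)
  qed
  have W2: "\<not> WAXp n kap ?v {2}"
  proof -
    have "x2 \<in> Upsilon n {2} ?v" using x2p by (simp add: Upsilon_def x2_def)
    thus ?thesis unfolding WAXp_def using kx2 kv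
      by (subst cond_exp_one[OF vU g01]) (auto simp: sim_def)
  qed
  have A: "AXp n kap ?v {1,2}"
    unfolding AXp_def using W12 W1 W2 by (auto simp: insert_Diff_if)
  have rel: "relevant n kap ?v 1" unfolding relevant_def using A by blast
  have cl: "is_classifier n kap" unfolding is_classifier_def using vv_pt x1p kx1 kv by blast
  have f1: "1 \<in> feats n" using n by (simp add: feats_def)
  show ?thesis using cl vv_pt rel shap_zero[OF n] f1 by blast
qed

end
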